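(* In the non-stationary non-deterministic bandit described in the context, satisfying the stated assumption with constants $\theta>1$, $\xi>1$, $1/2\le\eta<1$, define for each arm $i$ $$\mu_i=\mathrm{ERM}_\beta(c_i+\gamma\mu_i^{s'})=\frac1\beta\ln\Big(\mathbb{E}_{s'\sim P^i}\big[\exp(\beta(c_i+\gamma\mu_i^{s'}))\big]\Big).$$ Then for every arm $i$: 1. $\lim_{n\to\infty}\mu_{i,n}=\mu_i$; 2. there exist constants $\theta^L>1$, $\xi^L>1$, $1/2\le\eta^L<1$ such that for any $z\ge1$ and $n\in\mathbb{N}$, $$\mathbb{P}[n\hat\rho_{i,n}-n\mu_i\ge n^{\eta^L}z]\le\frac{\theta^L}{z^{\xi^L}},\qquad \mathbb{P}[n\hat\rho_{i,n}-n\mu_i\le -n^{\eta^L}z]\le\frac{\theta^L}{z^{\xi^L}},$$ with $\eta^L=\eta$, $\xi^L=\xi$, and $\theta^L$ depending on $\xi,\theta,R,\beta,|\mathcal{S}|$.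
   Context: Non-deterministic bandit with $K$ arms and finite state set $\mathcal{S}$, $\beta>0$, $\gamma\in(0,1]$. Selecting arm $i$ yields a deterministic cost $c_i\in[-R_c,R_c]$ and a next state $s'\in\mathcal{S}$ drawn independently each time from a distribution $P^i$ on $\mathcal{S}$; for each $i$ and $s'$ there is a sequence of random costs $(x^{s'}_{i,t})_{t\ge1}$ in $[-R_x,R_x]$, $x^{s'}_{i,t}$ being the cost obtained the $t$-th time state $s'$ follows arm $i$; these may be non-stationary. Let $R=R_c+R_x$. For $b>0$, $\mathrm{ERM}_b(Z)=\frac1b\ln\mathbb{E}[e^{bZ}]$. Let $\hat\rho^{s'}_{i,n}=\frac1{\beta\gamma}\ln\big(\frac1n\sum_{t=1}^n\exp(\beta\gamma x^{s'}_{i,t})\big)$ and $\mu^{s'}_{i,n}=\mathbb{E}[\hat\rho^{s'}_{i,n}]$. Assumption: for every $i$ and $s'$, $\lim_n\mu^{s'}_{i,n}=\mu^{s'}_i$ exists, and for all $z\ge1$, $n\in\mathbb{N}$: $\mathbb{P}[n\hat\rho^{s'}_{i,n}-n\mu^{s'}_i\ge n^\eta z]\le\theta/z^\xi$ and $\mathbb{P}[n\hat\rho^{s'}_{i,n}-n\mu^{s'}_i\le -n^\eta z]\le\theta/z^\xi$. Let $T^{s'}_i(n)$ be the number of times state $s'$ was sampled in the first $n$ selections of arm $i$, and $$\hat\rho_{i,n}=\frac1\beta\ln\Big(\frac1n\sum_{s'\in\mathcal{S}}\sum_{t=1}^{T^{s'}_i(n)}\exp\big(\beta(c_i+\gamma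 x^{s'}_{i,t})\big)\Big),\qquad \mu_{i,n}=\mathbb{E}[\hat\rho_{i,n}].$$ *)

theory Defs
  imports "HOL-Probability.Probability"
begin

text \<open>St k is the next state drawn at the k-th selection of the arm (k \<ge> 1);
  x s t is the cost x^{s}_{i,t} obtained the t-th time state s follows the arm (t \<ge> 1).\<close>

definition erm_arm :: "real \<Rightarrow> real \<Rightarrow> real \<Rightarrow> 's pmf \<Rightarrow> ('s \<Rightarrow> real) \<Rightarrow> real" where
  "erm_arm \<beta> \<gamma> c P muS =
     (1 / \<beta>) * ln (measure_pmf.expectation P (\<lambda>s. exp (\<beta> * (c + \<gamma> * muS s))))"

definition rho_hat_state :: "real \<Rightarrow> real \<Rightarrow> ('s \<Rightarrow> nat \<Rightarrow> 'w \<Rightarrow> real) \<Rightarrow> 's \<Rightarrow> nat \<Rightarrow> 'w \<Rightarrow> real" where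
  "rho_hat_state \<beta> \<gamma> x s n \<omega> =
     (1 / (\<beta> * \<gamma>)) * ln ((1 / real n) * (\<Sum>t = 1..n. exp (\<beta> * \<gamma> * x s t \<omega>)))"

definition state_count :: "(nat \<Rightarrow> 'w \<Rightarrow> 's) \<Rightarrow> 's \<Rightarrow> nat \<Rightarrow> 'w \<Rightarrow> nat" where
  "state_count St s n \<omega> = card {k \<in> {1..n}. St k \<omega> = s}"

definition rho_hat :: "real \<Rightarrow> real \<Rightarrow> real \<Rightarrow> ('s::finite \<Rightarrow> nat \<Rightarrow> 'w \<Rightarrow> real)
    \<Rightarrow> (nat \<Rightarrow> 'w \<Rightarrow> 's) \<Rightarrow> nat \<Rightarrow> 'w \<Rightarrow> real" where
  "rho_hat \<beta> \<gamma> c x St n \<omega> =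
     (1 / \<beta>) * ln ((1 / real n) *
        (\<Sum>s\<in>UNIV. \<Sum>t = 1..state_count St s n \<omega>. exp (\<beta> * (c + \<gamma> * x s t \<omega>))))"

definition arm_model ::
  "'w measure \<Rightarrow> real \<Rightarrow> real \<Rightarrow> real \<Rightarrow> real \<Rightarrow> 's::finite pmf
   \<Rightarrow> ('s \<Rightarrow> nat \<Rightarrow> 'w \<Rightarrow> real) \<Rightarrow> (nat \<Rightarrow> 'w \<Rightarrow> 's) \<Rightarrow> bool" where
  "arm_model M \<gamma> Rc Rx c P x St \<longleftrightarrow>
     prob_space M \<and> 0 < \<gamma> \<and> \<gamma> \<le> 1 \<and> \<bar>c\<bar> \<le> Rc \<and>
     (\<forall>s t. x s t \<in> borel_measurable M) \<and>
     (\<forall>s t. \<forall>\<omega>\<in>space M. \<bar>x s t \<omega>\<bar> \<le> Rx) \<and>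
     prob_space.indep_vars M (\<lambda>_. count_space UNIV) St {1..} \<and>
     (\<forall>k\<ge>1. distr M (count_space UNIV) (St k) = measure_pmf P) \<and>
     prob_space.indep_set M
        (sigma_sets (space M) {St k -` A \<inter> space M | k A. k \<ge> 1})
        (sigma_sets (space M) {x s t -` B \<inter> space M | s t B. B \<in> sets borel})"

definition state_assm ::
  "'w measure \<Rightarrow> real \<Rightarrow> real \<Rightarrow> ('s \<Rightarrow> nat \<Rightarrow> 'w \<Rightarrow> real) \<Rightarrow> ('s \<Rightarrow> real)
   \<Rightarrow> real \<Rightarrow> real \<Rightarrow> real \<Rightarrow> bool" where
  "state_assm M \<beta> \<gamma> x muS \<theta> \<xi> \<eta> \<longleftrightarrow>
     (\<forall>s. (\<lambda>n. integral\<^sup>L M (rho_hat_state \<beta> \<gamma> x s n)) \<longlonglongrightarrow> muS s) \<and>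
     (\<forall>s z n. z \<ge> 1 \<longrightarrow> n \<ge> 1 \<longrightarrow>
        measure M {\<omega> \<in> space M. real n * rho_hat_state \<beta> \<gamma> x s n \<omega> - real n * muS s
                                  \<ge> real n powr \<eta> * z} \<le> \<theta> / z powr \<xi> \<and>
        measure M {\<omega> \<in> space M. real n * rho_hat_state \<beta> \<gamma> x s n \<omega> - real n * muS s
                                  \<le> - (real n powr \<eta> * z)} \<le> \<theta> / z powr \<xi>)"

end

theory Submission
  imports Defs "HOL-Real_Asymp.Real_Asymp"
begin

lemma mean_exp_bounds:
  fixes y :: "nat \<Rightarrow> real"
  assumes n: "n \<ge> 1" and b: "\<And>t. t \<in> {1..n} \<Longrightarrow> \<bar>y t\<bar> \<le> B"
  shows "exp (-B) \<le> (1/real n) * (\<Sum>t=1..n. exp (y t))"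
    and "(1/real n) * (\<Sum>t=1..n. exp (y t)) \<le> exp B"
    and "\<bar>ln ((1/real n) * (\<Sum>t=1..n. exp (y t)))\<bar> \<le> B"
proof -
  have lo: "(\<Sum>t=1..n. exp (-B)) \<le> (\<Sum>t=1..n. exp (y t))"
  proof (intro sum_mono)
    fix t assume "t \<in> {1..n}" then show "exp (-B) \<le> exp (y t)" using b[of t] by (simp add: abs_le_iff)
  qed
  have hi: "(\<Sum>t=1..n. exp (y t)) \<le> (\<Sum>t=1..n. exp B)"
  proof (intro sum_mono)
    fix t assume "t \<in> {1..n}" then show "exp (y t) \<le> exp B" using b[of t] by (simp add: abs_le_iff)
  qed
  have np: "real n > 0" using n by simp
  show 1: "exp (-B) \<le> (1/real n) * (\<Sum>t=1..n. exp (y t))"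
    using lo np by (simp add: field_simps)
  show 2: "(1/real n) * (\<Sum>t=1..n. exp (y t)) \<le> exp B"
    using hi np by (simp add: field_simps)
  have pos: "0 < (1/real n) * (\<Sum>t=1..n. exp (y t))"
    using 1 by (smt (verit) exp_gt_zero)
  have "ln ((1/real n) * (\<Sum>t=1..n. exp (y t))) \<le> B"
    using 2 pos by (metis ln_exp ln_le_cancel_iff exp_gt_zero)
  moreover have "- B \<le> ln ((1/real n) * (\<Sum>t=1..n. exp (y t)))"
    using 1 pos by (metis ln_exp ln_le_cancel_iff exp_gt_zero)
  ultimately show "\<bar>ln ((1/real n) * (\<Sum>t=1..n. exp (y t)))\<bar> \<le> B" by linarith
qed

lemma rho_hat_state_bound:
  assumes "\<beta> > 0" "\<gamma> > 0" "\<gamma> \<le> 1" "n \<ge> 1" "\<And>t. \<bar>x s t \<omega>\<bar> \<le> Rx"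
  shows "\<bar>rho_hat_state \<beta> \<gamma> x s n \<omega>\<bar> \<le> Rx"
proof -
  have "\<bar>\<beta> * \<gamma> * x s t \<omega>\<bar> \<le> \<beta> * \<gamma> * Rx" for t
    using assms(1,2) assms(5)[of t] by (simp add: abs_mult)
  from mean_exp_bounds(3)[where y="\<lambda>t. \<beta> * \<gamma> * x s t \<omega>" and B="\<beta> * \<gamma> * Rx", OF assms(4) this]
  have "\<bar>ln ((1/real n) * (\<Sum>t=1..n. exp (\<beta> * \<gamma> * x s t \<omega>)))\<bar> \<le> \<beta> * \<gamma> * Rx" .
  moreover have "\<beta> * \<gamma> > 0" using assms by simp
  ultimately show ?thesis unfolding rho_hat_state_def using assms(1,2)
    by (simp add: abs_mult field_simps pos_divide_le_eq)
qed

lemma exp_diff_le: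
  fixes a b K :: real
  assumes "a \<le> K" "b \<le> K"
  shows "\<bar>exp a - exp b\<bar> \<le> exp K * \<bar>a - b\<bar>"
proof -
  have *: "exp u - exp v \<le> exp K * (u - v)" if "v \<le> u" "u \<le> K" for u v :: real
  proof -
    have "1 + (v - u) \<le> exp (v - u)" by simp
    hence "1 - exp (v - u) \<le> u - v" by linarith
    hence "exp u * (1 - exp (v - u)) \<le> exp u * (u - v)" by (intro mult_left_mono) auto
    also have "exp u * (1 - exp (v - u)) = exp u - exp v" by (simp add: exp_diff field_simps)
    also have "exp u * (u - v) \<le> exp K * (u - v)" using that by (intro mult_right_mono) auto
    finally show ?thesis .
  qed
  show ?thesis
  proof (cases "b \<le> a")
    case True with *[of b a] assms show ?thesis by auto
  next
    case False with *[of a b] assms show ?thesis by auto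
  qed
qed

lemma ln_diff_le:
  fixes u v L :: real
  assumes "L > 0" "u \<ge> L" "v \<ge> L"
  shows "\<bar>ln u - ln v\<bar> \<le> \<bar>u - v\<bar> / L"
proof -
  have *: "ln u - ln v \<le> (u - v) / L" if "v \<le> u" "v \<ge> L" "L > 0" for u v :: real
  proof -
    have "ln u - ln v = ln (u / v)" using that by (simp add: ln_div)
    also have "\<dots> \<le> u / v - 1" using that by (intro ln_le_minus_one) auto
    also have "\<dots> = (u - v) / v" using that by (simp add: field_simps)
    also have "\<dots> \<le> (u - v) / L" using that by (intro divide_left_mono) auto
    finally show ?thesis .
  qed
  show ?thesis
  proof (cases "v \<le> u")
    case True with *[of v u] assms show ?thesis
      by (smt (verit) divide_nonneg_pos ln_le_cancel_iff)
  next
    case False with *[of u v] assms show ?thesis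
      by (smt (verit) divide_nonneg_pos ln_le_cancel_iff)
  qed
qed

lemma sum_state_count:
  "(\<Sum>s\<in>(UNIV::'s::finite set). state_count St s n \<omega>) = n"
proof -
  have "(\<Sum>s\<in>(UNIV::'s set). state_count St s n \<omega>) = card (\<Union>s. {k \<in> {1..n}. St k \<omega> = s})"
    unfolding state_count_def
    by (rule card_UN_disjoint[symmetric]) auto
  also have "(\<Union>s. {k \<in> {1..n}. St k \<omega> = s}) = {1..n}" by auto
  finally show ?thesis by simp
qed

lemma state_count_le: "state_count St s n \<omega> \<le> n"
  unfolding state_count_def by (rule order.trans[OF card_mono[of "{1..n}"]]) auto

lemma state_count_real: "real (state_count St s n \<omega>) = (\<Sum>k\<in>{1..n}. if St k \<omega> = s then 1 else 0)"
proof -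
  have "{k \<in> {1..n}. St k \<omega> = s} = {1..n} \<inter> {k. St k \<omega> = s}" by auto
  then show ?thesis unfolding state_count_def by (simp add: sum.If_cases)
qed

lemma key_pointwise:
  fixes x :: "'s::finite \<Rightarrow> nat \<Rightarrow> 'w \<Rightarrow> real" and P :: "'s pmf"
  assumes \<beta>: "\<beta> > 0" and \<gamma>: "\<gamma> > 0" "\<gamma> \<le> 1" and c: "\<bar>c\<bar> \<le> Rc"
    and xb: "\<And>s t. \<bar>x s t \<omega>\<bar> \<le> Rx" and mub: "\<And>s. \<bar>muS s\<bar> \<le> Rx" and n: "n \<ge> 1"
  shows "\<bar>real n * rho_hat \<beta> \<gamma> c x St n \<omega> - real n * erm_arm \<beta> \<gamma> c P muS\<bar>
     \<le> exp (2 * \<beta> * (Rc + Rx)) / \<beta> *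
        (\<Sum>s\<in>UNIV. \<beta> * real (state_count St s n \<omega>) *
              \<bar>rho_hat_state \<beta> \<gamma> x s (state_count St s n \<omega>) \<omega> - muS s\<bar>
           + \<bar>real (state_count St s n \<omega>) - real n * pmf P s\<bar>)"
proof -
  define T where "T s = state_count St s n \<omega>" for s
  define W where "W s = (\<Sum>t=1..T s. exp (\<beta> * \<gamma> * x s t \<omega>))" for s
  define r where "r s = rho_hat_state \<beta> \<gamma> x s (T s) \<omega>" for s
  define e where "e s = exp (\<beta> * \<gamma> * muS s)" for s
  define L where "L = exp (- (\<beta> * (Rc + Rx)))"
  have Rx0: "Rx \<ge> 0" using xb[of undefined 0] by linarith
  have Rc0: "Rc \<ge> 0" using c by linarith
  have bg: "\<beta> * \<gamma> > 0" using \<beta> \<gamma> by simp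
  have npos: "real n > 0" using n by simp
  have sumT: "(\<Sum>s\<in>UNIV. real (T s)) = real n"
    unfolding T_def using sum_state_count[of St n \<omega>] by (metis of_nat_sum)
  have xb2: "\<bar>\<beta> * \<gamma> * x s t \<omega>\<bar> \<le> \<beta> * Rx" for s t
  proof -
    have "\<bar>\<beta> * \<gamma> * x s t \<omega>\<bar> = \<beta> * (\<gamma> * \<bar>x s t \<omega>\<bar>)" using \<beta> \<gamma> by (simp add: abs_mult)
    also have "\<gamma> * \<bar>x s t \<omega>\<bar> \<le> 1 * Rx" using \<gamma> xb[of s t] by (intro mult_mono) auto
    finally show ?thesis using \<beta> by (simp add: mult_left_mono)
  qed
  have mub2: "\<bar>\<beta> * \<gamma> * muS s\<bar> \<le> \<beta> * Rx" for s
  proof -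
    have "\<bar>\<beta> * \<gamma> * muS s\<bar> = \<beta> * (\<gamma> * \<bar>muS s\<bar>)" using \<beta> \<gamma> by (simp add: abs_mult)
    also have "\<gamma> * \<bar>muS s\<bar> \<le> 1 * Rx" using \<gamma> mub[of s] by (intro mult_mono) auto
    finally show ?thesis using \<beta> by (simp add: mult_left_mono)
  qed
  have Wform: "W s = real (T s) * exp (\<beta> * \<gamma> * r s)" for s
  proof (cases "T s = 0")
    case True then show ?thesis by (simp add: W_def)
  next
    case False
    then have T1: "T s \<ge> 1" by simp
    define m where "m = (1 / real (T s)) * W s"
    have "exp (- (\<beta> * Rx)) \<le> m" unfolding m_def W_def
      by (rule mean_exp_bounds(1)[OF T1]) (use xb2 in auto)
    then have mpos: "m > 0" by (smt (verit) exp_gt_zero)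
    have "\<beta> * \<gamma> * r s = ln m" unfolding r_def rho_hat_state_def m_def W_def using bg by simp
    then have "exp (\<beta> * \<gamma> * r s) = m" using mpos by simp
    then show ?thesis unfolding m_def using T1 by simp
  qed
  have Wlow: "W s \<ge> real (T s) * exp (- (\<beta> * Rx))" for s
  proof -
    have "(\<Sum>t=1..T s. exp (- (\<beta> * Rx))) \<le> W s" unfolding W_def
    proof (intro sum_mono)
      fix t show "exp (- (\<beta> * Rx)) \<le> exp (\<beta> * \<gamma> * x s t \<omega>)" using xb2[of s t] by (simp add: abs_le_iff)
    qed
    then show ?thesis by simp
  qed
  have Y: "(\<Sum>s\<in>UNIV. \<Sum>t = 1..state_count St s n \<omega>. exp (\<beta> * (c + \<gamma> * x s t \<omega>)))
      = exp (\<beta> * c) * (\<Sum>s\<in>UNIV. W s)"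
    unfolding W_def T_def by (simp add: sum_distrib_left distrib_left exp_add mult.assoc)
  have E: "measure_pmf.expectation P (\<lambda>s. exp (\<beta> * (c + \<gamma> * muS s)))
      = exp (\<beta> * c) * (\<Sum>s\<in>UNIV. pmf P s * e s)"
    by (subst integral_measure_pmf_real[where A=UNIV])
       (auto simp: e_def sum_distrib_left distrib_left exp_add mult_ac)
  define U where "U = (1 / real n) * (exp (\<beta> * c) * (\<Sum>s\<in>UNIV. W s))"
  define V where "V = exp (\<beta> * c) * (\<Sum>s\<in>UNIV. pmf P s * e s)"
  have L0: "L > 0" unfolding L_def by simp
  have ebc: "exp (\<beta> * c) \<ge> exp (- (\<beta> * Rc))" "exp (\<beta> * c) \<le> exp (\<beta> * Rc)"
  proof -
    have "- (\<beta> * Rc) \<le> \<beta> * c" "\<beta> * c \<le> \<beta> * Rc" using c \<beta>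
      by (smt (verit, best) abs_le_iff mult_left_mono mult_minus_right)+
    then show "exp (\<beta> * c) \<ge> exp (- (\<beta> * Rc))" "exp (\<beta> * c) \<le> exp (\<beta> * Rc)" by auto
  qed
  have UL: "U \<ge> L"
  proof -
    have "(\<Sum>s\<in>UNIV. real (T s) * exp (- (\<beta> * Rx))) \<le> (\<Sum>s\<in>UNIV. W s)"
      by (intro sum_mono Wlow)
    then have "real n * exp (- (\<beta> * Rx)) \<le> (\<Sum>s\<in>UNIV. W s)"
      by (simp add: sum_distrib_right[symmetric] sumT)
    then have "exp (- (\<beta> * Rx)) \<le> (1 / real n) * (\<Sum>s\<in>UNIV. W s)"
      using npos by (simp add: divide_simps mult.commute)
    then have "exp (- (\<beta> * Rc)) * exp (- (\<beta> * Rx)) \<le> exp (\<beta> * c) * ((1 / real n) * (\<Sum>s\<in>UNIV. W s))"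
      using ebc by (intro mult_mono) auto
    then show ?thesis unfolding U_def L_def by (simp add: exp_add[symmetric] algebra_simps)
  qed
  have VL: "V \<ge> L"
  proof -
    have "(\<Sum>s\<in>UNIV. pmf P s * exp (- (\<beta> * Rx))) \<le> (\<Sum>s\<in>UNIV. pmf P s * e s)"
    proof (intro sum_mono mult_left_mono)
      fix s show "exp (- (\<beta> * Rx)) \<le> e s" using mub2[of s] unfolding e_def by (simp add: abs_le_iff)
    qed auto
    moreover have "(\<Sum>s\<in>UNIV. pmf P s) = 1" by (rule sum_pmf_eq_1) auto
    ultimately have "exp (- (\<beta> * Rx)) \<le> (\<Sum>s\<in>UNIV. pmf P s * e s)"
      by (simp add: sum_distrib_right[symmetric])
    then have "exp (- (\<beta> * Rc)) * exp (- (\<beta> * Rx)) \<le> V"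
      unfolding V_def using ebc by (intro mult_mono) auto
    then show ?thesis unfolding L_def by (simp add: exp_add[symmetric] algebra_simps)
  qed
  have rho: "rho_hat \<beta> \<gamma> c x St n \<omega> = (1/\<beta>) * ln U"
    unfolding rho_hat_def U_def using Y by simp
  have erm: "erm_arm \<beta> \<gamma> c P muS = (1/\<beta>) * ln V"
    unfolding erm_arm_def V_def using E by simp
  have "\<bar>real n * rho_hat \<beta> \<gamma> c x St n \<omega> - real n * erm_arm \<beta> \<gamma> c P muS\<bar>
      = (real n / \<beta>) * \<bar>ln U - ln V\<bar>"
  proof -
    have "real n * ((1/\<beta>) * ln U) - real n * ((1/\<beta>) * ln V) = (real n / \<beta>) * (ln U - ln V)"
      by (simp add: algebra_simps)
    moreover have "real n / \<beta> \<ge> 0" using \<beta> by simp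
    ultimately show ?thesis unfolding rho erm using \<beta> by (simp add: abs_mult)
  qed
  also have "\<dots> \<le> (real n / \<beta>) * (\<bar>U - V\<bar> / L)"
    using ln_diff_le[OF L0 UL VL] \<beta> npos by (intro mult_left_mono) auto
  also have "\<dots> = \<bar>real n * U - real n * V\<bar> / (\<beta> * L)"
  proof -
    have "\<bar>real n * U - real n * V\<bar> = real n * \<bar>U - V\<bar>"
      by (simp add: abs_mult right_diff_distrib[symmetric])
    then show ?thesis by simp
  qed
  also have "real n * U - real n * V = exp (\<beta> * c) * (\<Sum>s\<in>UNIV. W s - real n * pmf P s * e s)"
  proof -
    have "real n * U = exp (\<beta> * c) * (\<Sum>s\<in>UNIV. W s)" unfolding U_def using npos by simp
    moreover have "real n * V = exp (\<beta> * c) * (\<Sum>s\<in>UNIV. real n * pmf P s * e s)"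
      unfolding V_def by (simp add: sum_distrib_left mult.assoc mult.left_commute)
    ultimately show ?thesis by (simp add: sum_subtractf right_diff_distrib)
  qed
  also have "\<bar>\<dots>\<bar> \<le> exp (\<beta> * Rc) * (\<Sum>s\<in>UNIV. exp (\<beta> * Rx) *
       (\<beta> * real (T s) * \<bar>r s - muS s\<bar> + \<bar>real (T s) - real n * pmf P s\<bar>))"
  proof -
    have "\<bar>W s - real n * pmf P s * e s\<bar> \<le> exp (\<beta> * Rx) *
       (\<beta> * real (T s) * \<bar>r s - muS s\<bar> + \<bar>real (T s) - real n * pmf P s\<bar>)" for s
    proof -
      have eb: "e s \<le> exp (\<beta> * Rx)" "e s \<ge> 0" using mub2[of s] by (auto simp: e_def abs_le_iff)
      have A: "real (T s) * \<bar>exp (\<beta> * \<gamma> * r s) - e s\<bar> \<le> exp (\<beta> * Rx) * (\<beta> * real (T s) * \<bar>r s - muS s\<bar>)"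
      proof (cases "T s = 0")
        case True then show ?thesis by simp
      next
        case False
        then have T1: "T s \<ge> 1" by simp
        have rb: "\<bar>r s\<bar> \<le> Rx" unfolding r_def
          by (rule rho_hat_state_bound[where x=x and s=s and \<omega>=\<omega>, OF \<beta> \<gamma> T1 xb])
        have rb2: "\<beta> * \<gamma> * r s \<le> \<beta> * Rx"
        proof -
          have "\<gamma> * r s \<le> \<gamma> * Rx" using rb \<gamma> by (intro mult_left_mono) auto
          also have "\<dots> \<le> 1 * Rx" using \<gamma> Rx0 by (intro mult_right_mono) auto
          finally have "\<gamma> * r s \<le> 1 * Rx" .
          then show ?thesis using \<beta> by (simp add: mult.assoc mult_left_mono)
        qed
        have "\<bar>exp (\<beta> * \<gamma> * r s) - e s\<bar> \<le> exp (\<beta> * Rx) * \<bar>\<beta> * \<gamma> * r s - \<beta> * \<gamma> * muS s\<bar>"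
          unfolding e_def by (rule exp_diff_le[OF rb2]) (use mub2[of s] in auto)
        also have "\<bar>\<beta> * \<gamma> * r s - \<beta> * \<gamma> * muS s\<bar> = \<beta> * \<gamma> * \<bar>r s - muS s\<bar>"
          using \<beta> \<gamma> by (simp add: abs_mult right_diff_distrib[symmetric])
        also have "\<dots> \<le> \<beta> * 1 * \<bar>r s - muS s\<bar>"
          using \<beta> \<gamma> by (intro mult_right_mono mult_left_mono) auto
        finally have "\<bar>exp (\<beta> * \<gamma> * r s) - e s\<bar> \<le> exp (\<beta> * Rx) * (\<beta> * \<bar>r s - muS s\<bar>)"
          by (simp add: mult_left_mono)
        then have "real (T s) * \<bar>exp (\<beta> * \<gamma> * r s) - e s\<bar> \<le> real (T s) * (exp (\<beta> * Rx) * (\<beta> * \<bar>r s - muS s\<bar>))"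
          by (intro mult_left_mono) auto
        then show ?thesis by (simp add: mult_ac)
      qed
      have B: "\<bar>real (T s) - real n * pmf P s\<bar> * e s \<le> exp (\<beta> * Rx) * \<bar>real (T s) - real n * pmf P s\<bar>"
        using eb by (intro order.trans[OF eq_refl mult_right_mono[of "e s" "exp (\<beta> * Rx)"]]) (auto simp: mult.commute)
      have "W s - real n * pmf P s * e s = real (T s) * (exp (\<beta> * \<gamma> * r s) - e s) + (real (T s) - real n * pmf P s) * e s"
        unfolding Wform by (simp add: algebra_simps)
      then have "\<bar>W s - real n * pmf P s * e s\<bar> \<le> real (T s) * \<bar>exp (\<beta> * \<gamma> * r s) - e s\<bar> + \<bar>real (T s) - real n * pmf P s\<bar> * e s"
      proof -
        have "\<bar>real (T s) * (exp (\<beta> * \<gamma> * r s) - e s) + (real (T s) - real n * pmf P s) * e s\<bar>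
           \<le> \<bar>real (T s) * (exp (\<beta> * \<gamma> * r s) - e s)\<bar> + \<bar>(real (T s) - real n * pmf P s) * e s\<bar>"
          by (rule abs_triangle_ineq)
        also have "\<bar>real (T s) * (exp (\<beta> * \<gamma> * r s) - e s)\<bar> = real (T s) * \<bar>exp (\<beta> * \<gamma> * r s) - e s\<bar>"
          by (simp add: abs_mult)
        also have "\<bar>(real (T s) - real n * pmf P s) * e s\<bar> = \<bar>real (T s) - real n * pmf P s\<bar> * e s"
          using eb by (simp add: abs_mult)
        finally show ?thesis using \<open>W s - real n * pmf P s * e s = _\<close> by simp
      qed
      then show ?thesis using A B by (simp add: distrib_left)
    qed
    then have S: "\<bar>\<Sum>s\<in>UNIV. W s - real n * pmf P s * e s\<bar> \<le> (\<Sum>s\<in>UNIV. exp (\<beta> * Rx) *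
       (\<beta> * real (T s) * \<bar>r s - muS s\<bar> + \<bar>real (T s) - real n * pmf P s\<bar>))"
      by (intro order.trans[OF sum_abs] sum_mono) auto
    have "\<bar>exp (\<beta> * c) * (\<Sum>s\<in>UNIV. W s - real n * pmf P s * e s)\<bar>
       = exp (\<beta> * c) * \<bar>\<Sum>s\<in>UNIV. W s - real n * pmf P s * e s\<bar>" by (simp add: abs_mult)
    also have "\<dots> \<le> exp (\<beta> * Rc) * (\<Sum>s\<in>UNIV. exp (\<beta> * Rx) *
       (\<beta> * real (T s) * \<bar>r s - muS s\<bar> + \<bar>real (T s) - real n * pmf P s\<bar>))"
      using ebc S by (intro mult_mono) auto
    finally show ?thesis .
  qed
  also have "exp (\<beta> * Rc) * (\<Sum>s\<in>UNIV. exp (\<beta> * Rx) *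
       (\<beta> * real (T s) * \<bar>r s - muS s\<bar> + \<bar>real (T s) - real n * pmf P s\<bar>)) / (\<beta> * L)
     = exp (2 * \<beta> * (Rc + Rx)) / \<beta> *
        (\<Sum>s\<in>UNIV. \<beta> * real (T s) * \<bar>r s - muS s\<bar> + \<bar>real (T s) - real n * pmf P s\<bar>)"
  proof -
    have "exp (\<beta> * Rc) * exp (\<beta> * Rx) / L = exp (\<beta> * Rc) * exp (\<beta> * Rx) * exp (\<beta> * (Rc + Rx))"
      unfolding L_def by (simp add: exp_minus divide_inverse)
    also have "\<dots> = exp (2 * \<beta> * (Rc + Rx))" by (simp add: exp_add[symmetric] algebra_simps)
    finally have k: "exp (\<beta> * Rc) * exp (\<beta> * Rx) / L = exp (2 * \<beta> * (Rc + Rx))" .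
    define S where "S = (\<Sum>s\<in>UNIV. \<beta> * real (T s) * \<bar>r s - muS s\<bar> + \<bar>real (T s) - real n * pmf P s\<bar>)"
    have "(\<Sum>s\<in>UNIV. exp (\<beta> * Rx) *
       (\<beta> * real (T s) * \<bar>r s - muS s\<bar> + \<bar>real (T s) - real n * pmf P s\<bar>)) = exp (\<beta> * Rx) * S"
      unfolding S_def by (simp add: sum_distrib_left)
    then have "exp (\<beta> * Rc) * (\<Sum>s\<in>UNIV. exp (\<beta> * Rx) *
       (\<beta> * real (T s) * \<bar>r s - muS s\<bar> + \<bar>real (T s) - real n * pmf P s\<bar>)) / (\<beta> * L)
       = (exp (\<beta> * Rc) * exp (\<beta> * Rx) / L) / \<beta> * S" by (simp add: mult_ac)
    also have "\<dots> = exp (2 * \<beta> * (Rc + Rx)) / \<beta> * S" by (simp only: k)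
    finally show ?thesis unfolding S_def .
  qed
  finally show ?thesis unfolding T_def r_def using \<beta> L0 by (simp add: divide_right_mono)
qed

locale arm_ctx = prob_space M for M :: "'w measure" +
  fixes \<gamma> Rc Rx c :: real and P :: "'s::finite pmf" and x :: "'s \<Rightarrow> nat \<Rightarrow> 'w \<Rightarrow> real"
    and St :: "nat \<Rightarrow> 'w \<Rightarrow> 's" and muS :: "'s \<Rightarrow> real" and \<beta> \<theta> \<xi> \<eta> :: real
  assumes \<beta>: "\<beta> > 0" and \<gamma>: "0 < \<gamma>" "\<gamma> \<le> 1" and cb: "\<bar>c\<bar> \<le> Rc"
    and Rc0: "Rc \<ge> 0" and Rx0: "Rx \<ge> 0"
    and \<theta>: "\<theta> > 1" and \<xi>: "\<xi> > 1" and \<eta>: "1/2 \<le> \<eta>" "\<eta> < 1"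
    and xm: "\<And>s t. x s t \<in> borel_measurable M"
    and xb: "\<And>s t \<omega>. \<omega> \<in> space M \<Longrightarrow> \<bar>x s t \<omega>\<bar> \<le> Rx"
    and indSt: "indep_vars (\<lambda>_. count_space UNIV) St {1..}"
    and distSt: "\<And>k. k \<ge> 1 \<Longrightarrow> distr M (count_space UNIV) (St k) = measure_pmf P"
    and indX: "indep_set
        (sigma_sets (space M) {St k -` A \<inter> space M | k A. k \<ge> 1})
        (sigma_sets (space M) {x s t -` B \<inter> space M | s t B. B \<in> sets borel})"
    and limS: "\<And>s. (\<lambda>n. integral\<^sup>L M (rho_hat_state \<beta> \<gamma> x s n)) \<longlonglongrightarrow> muS s"
    and tailS: "\<And>s z n. z \<ge> 1 \<Longrightarrow> n \<ge> 1 \<Longrightarrow>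
        measure M {\<omega> \<in> space M. real n * rho_hat_state \<beta> \<gamma> x s n \<omega> - real n * muS s
                                  \<ge> real n powr \<eta> * z} \<le> \<theta> / z powr \<xi> \<and>
        measure M {\<omega> \<in> space M. real n * rho_hat_state \<beta> \<gamma> x s n \<omega> - real n * muS s
                                  \<le> - (real n powr \<eta> * z)} \<le> \<theta> / z powr \<xi>"
begin

abbreviation "GS \<equiv> {St k -` A \<inter> space M | k A. k \<ge> 1}"
abbreviation "GX \<equiv> {x s t -` B \<inter> space M | s t B. B \<in> sets borel}"
abbreviation "MSt \<equiv> sigma (space M) GS"
abbreviation "MXc \<equiv> sigma (space M) GX"

lemma GS_sub: "GS \<subseteq> Pow (space M)" by auto
lemma GX_sub: "GX \<subseteq> Pow (space M)" by auto

lemma sets_MS: "sets MSt = sigma_sets (space M) GS" using GS_sub by simp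
lemma space_MS: "space MSt = space M" using GS_sub by simp
lemma sets_MX: "sets MXc = sigma_sets (space M) GX" using GX_sub by simp
lemma space_MX: "space MXc = space M" using GX_sub by simp

lemma St_MS: "k \<ge> 1 \<Longrightarrow> St k \<in> measurable MSt (count_space UNIV)"
proof (rule measurableI)
  fix A assume "k \<ge> 1"
  then have "St k -` A \<inter> space M \<in> GS" by blast
  then show "St k -` A \<inter> space MSt \<in> sets MSt"
    unfolding sets_MS space_MS by (rule sigma_sets.Basic)
qed auto

lemma x_MX: "x s t \<in> borel_measurable MXc"
proof (rule measurableI)
  fix B :: "real set" assume "B \<in> sets borel"
  then have "x s t -` B \<inter> space M \<in> GX" by blast
  then show "x s t -` B \<inter> space MXc \<in> sets MXc"
    unfolding sets_MX space_MX by (rule sigma_sets.Basic)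
qed auto

lemma St_M: "k \<ge> 1 \<Longrightarrow> St k \<in> measurable M (count_space UNIV)"
  using indSt unfolding indep_vars_def by auto

lemma ind_meas:
  assumes "\<And>k. k \<ge> 1 \<Longrightarrow> St k \<in> measurable N (count_space UNIV)"
  shows "(\<lambda>\<omega>. real (state_count St s n \<omega>)) \<in> borel_measurable N"
proof -
  have "(\<lambda>\<omega>. \<Sum>k\<in>{1..n}. if St k \<omega> = s then 1 else (0::real)) \<in> borel_measurable N"
  proof (rule borel_measurable_sum)
    fix k assume "k \<in> {1..n}"
    then have "St k \<in> measurable N (count_space UNIV)" using assms by auto
    moreover have "(\<lambda>y. if y = s then 1 else (0::real)) \<in> measurable (count_space UNIV) borel" by simp
    ultimately have "(\<lambda>y. if y = s then 1 else (0::real)) \<circ> St k \<in> borel_measurable N"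
      by (rule measurable_comp)
    then show "(\<lambda>\<omega>. if St k \<omega> = s then 1 else (0::real)) \<in> borel_measurable N"
      by (simp add: comp_def)
  qed
  then show ?thesis by (simp add: state_count_real)
qed

lemma T_MS: "(\<lambda>\<omega>. real (state_count St s n \<omega>)) \<in> borel_measurable MSt"
  by (rule ind_meas[OF St_MS])

lemma T_M: "(\<lambda>\<omega>. real (state_count St s n \<omega>)) \<in> borel_measurable M"
  by (rule ind_meas[OF St_M])

lemma rhoS_meas:
  assumes "\<And>s t. x s t \<in> borel_measurable N"
  shows "(\<lambda>\<omega>. rho_hat_state \<beta> \<gamma> x s m \<omega>) \<in> borel_measurable N"
  unfolding rho_hat_state_def using assms by measurable

lemma event_T: "{\<omega> \<in> space M. state_count St s n \<omega> = m} \<in> sigma_sets (space M) GS"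
proof -
  have "(\<lambda>\<omega>. real (state_count St s n \<omega>)) -` {real m} \<inter> space MSt \<in> sets MSt"
    by (rule measurable_sets[OF T_MS]) simp
  moreover have "(\<lambda>\<omega>. real (state_count St s n \<omega>)) -` {real m} \<inter> space MSt
       = {\<omega> \<in> space M. state_count St s n \<omega> = m}" unfolding space_MS by auto
  ultimately have "{\<omega> \<in> space M. state_count St s n \<omega> = m} \<in> sets MSt" by (simp only:)
  then show ?thesis by (simp only: sets_MS)
qed

definition Fset :: "'s \<Rightarrow> nat \<Rightarrow> real \<Rightarrow> 'w set" where
  "Fset s m z = {\<omega> \<in> space M. real m * rho_hat_state \<beta> \<gamma> x s m \<omega> - real m * muS s \<ge> real m powr \<eta> * z}
     \<union> {\<omega> \<in> space M. real m * rho_hat_state \<beta> \<gamma> x s m \<omega> - real m * muS s \<le> - (real m powr \<eta> * z)}"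

lemma event_F: "Fset s m z \<in> sigma_sets (space M) GX"
proof -
  note [measurable] = rhoS_meas[OF x_MX]
  have "{\<omega> \<in> space MXc. real m * rho_hat_state \<beta> \<gamma> x s m \<omega> - real m * muS s \<ge> real m powr \<eta> * z} \<in> sets MXc"
    by measurable
  moreover have "{\<omega> \<in> space MXc. real m * rho_hat_state \<beta> \<gamma> x s m \<omega> - real m * muS s \<le> - (real m powr \<eta> * z)} \<in> sets MXc"
    by measurable
  ultimately have "{\<omega> \<in> space MXc. real m * rho_hat_state \<beta> \<gamma> x s m \<omega> - real m * muS s \<ge> real m powr \<eta> * z}
     \<union> {\<omega> \<in> space MXc. real m * rho_hat_state \<beta> \<gamma> x s m \<omega> - real m * muS s \<le> - (real m powr \<eta> * z)} \<in> sets MXc"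
    by (rule sets.Un)
  then show ?thesis unfolding Fset_def by (simp only: space_MX sets_MX)
qed

lemma prob_F: "z \<ge> 1 \<Longrightarrow> m \<ge> 1 \<Longrightarrow> prob (Fset s m z) \<le> 2 * \<theta> / z powr \<xi>"
proof -
  assume "z \<ge> 1" "m \<ge> 1"
  note t = tailS[OF this, of s]
  note [measurable] = rhoS_meas[OF xm]
  have "prob (Fset s m z) \<le>
     prob {\<omega> \<in> space M. real m * rho_hat_state \<beta> \<gamma> x s m \<omega> - real m * muS s \<ge> real m powr \<eta> * z}
     + prob {\<omega> \<in> space M. real m * rho_hat_state \<beta> \<gamma> x s m \<omega> - real m * muS s \<le> - (real m powr \<eta> * z)}"
    unfolding Fset_def by (rule measure_Un_le) measurable
  also have "\<dots> \<le> \<theta> / z powr \<xi> + \<theta> / z powr \<xi>" using t by (intro add_mono) auto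
  finally show ?thesis by simp
qed

lemma indep_TF:
  "prob ({\<omega> \<in> space M. state_count St s n \<omega> = m} \<inter> Fset s' m' z)
     = prob {\<omega> \<in> space M. state_count St s n \<omega> = m} * prob (Fset s' m' z)"
  by (rule indep_setD[OF indX event_T event_F])

lemma muS_bound: "\<bar>muS s\<bar> \<le> Rx"
proof -
  have b: "\<bar>rho_hat_state \<beta> \<gamma> x s n \<omega>\<bar> \<le> Rx" if "n \<ge> 1" "\<omega> \<in> space M" for n \<omega>
    by (rule rho_hat_state_bound[OF \<beta> \<gamma> that(1)]) (use xb that(2) in auto)
  have up: "integral\<^sup>L M (rho_hat_state \<beta> \<gamma> x s n) \<le> Rx" if "n \<ge> 1" for n
  proof -
    have "integral\<^sup>L M (rho_hat_state \<beta> \<gamma> x s n) \<le> (\<integral>\<omega>. Rx \<partial>M)"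
      by (rule integral_mono') (use b[OF that] Rx0 in \<open>auto simp: abs_le_iff\<close>)
    then show ?thesis by (simp add: prob_space)
  qed
  have lo: "- Rx \<le> integral\<^sup>L M (rho_hat_state \<beta> \<gamma> x s n)" if "n \<ge> 1" for n
  proof -
    have "(\<integral>\<omega>. - rho_hat_state \<beta> \<gamma> x s n \<omega> \<partial>M) \<le> (\<integral>\<omega>. Rx \<partial>M)"
      by (rule integral_mono') (use b[OF that] Rx0 in \<open>auto simp: abs_le_iff\<close>)
    then show ?thesis by (simp add: prob_space)
  qed
  have "muS s \<le> Rx" by (rule LIMSEQ_le_const2[OF limS]) (use up in auto)
  moreover have "- Rx \<le> muS s" by (rule LIMSEQ_le_const[OF limS]) (use lo in auto)
  ultimately show ?thesis by simp
qed

end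

lemma exp_tail:
  fixes a p z :: real
  assumes a: "a > 0" and p: "p > 0" and z: "z > 0"
  shows "exp (- (a * z\<^sup>2)) \<le> (p / a) powr p / z powr (2 * p)"
proof -
  define y where "y = a * z\<^sup>2 / p"
  have y0: "y > 0" unfolding y_def using a p z by simp
  have "y \<le> exp y" using exp_ge_add_one_self[of y] by linarith
  then have "y powr p \<le> exp y powr p" using y0 p by (intro powr_mono2) auto
  also have "exp y powr p = exp (a * z\<^sup>2)"
  proof -
    have "y * p = a * z\<^sup>2" unfolding y_def using p by simp
    then show ?thesis by (simp only: exp_powr_real)
  qed
  finally have 1: "y powr p \<le> exp (a * z\<^sup>2)" .
  have "y = (a / p) * z\<^sup>2" unfolding y_def by simp
  then have "y powr p = (a / p) powr p * (z\<^sup>2) powr p" by (simp only: powr_mult)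
  also have "(z\<^sup>2) powr p = z powr (2 * p)"
  proof -
    have "z\<^sup>2 = z powr 2" using z by simp
    then have "(z\<^sup>2) powr p = (z powr 2) powr p" by simp
    also have "\<dots> = z powr (2 * p)" by (rule powr_powr)
    finally show ?thesis .
  qed
  finally have 2: "y powr p = (a / p) powr p * z powr (2 * p)" .
  have pos: "(a / p) powr p * z powr (2 * p) > 0" using a p z by simp
  have "exp (- (a * z\<^sup>2)) = 1 / exp (a * z\<^sup>2)" by (simp add: exp_minus field_simps)
  also have "\<dots> \<le> 1 / ((a / p) powr p * z powr (2 * p))"
    using 1 2 pos by (intro divide_left_mono) auto
  also have "\<dots> = (p / a) powr p / z powr (2 * p)"
    using a p by (simp add: powr_divide)
  finally show ?thesis .
qed

lemma split_exists:
  fixes f g :: "'a \<Rightarrow> real"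
  assumes S: "finite S" "S \<noteq> {}" and w: "w \<le> (\<Sum>s\<in>S. f s + g s)"
  shows "\<exists>s\<in>S. w / (2 * real (card S)) \<le> f s \<or> w / (2 * real (card S)) \<le> g s"
proof (rule ccontr)
  assume "\<not> ?thesis"
  then have lt: "f s + g s < w / (2 * real (card S)) + w / (2 * real (card S))" if "s \<in> S" for s
    using that by force
  have "(\<Sum>s\<in>S. f s + g s) < (\<Sum>s\<in>S. w / (2 * real (card S)) + w / (2 * real (card S)))"
    by (rule sum_strict_mono[OF S lt])
  also have "\<dots> = w" using S by (simp add: field_simps)
  finally show False using w by simp
qed

definition thetaL :: "real \<Rightarrow> real \<Rightarrow> real \<Rightarrow> real \<Rightarrow> real \<Rightarrow> real" where
  "thetaL N \<beta> R \<theta> \<xi> =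
     N * (2 * \<theta> * (2 * N * exp (2 * \<beta> * R)) powr \<xi>
       + 2 * (\<xi> / (4 * (\<beta> / (2 * N * exp (2 * \<beta> * R)))\<^sup>2)) powr (\<xi> / 2))"

lemma thetaL_gt:
  assumes "N \<ge> 1" "\<beta> > 0" "R \<ge> 0" "\<theta> > 1" "\<xi> > 1"
  shows "thetaL N \<beta> R \<theta> \<xi> \<ge> 2 * \<theta> * (2 * N * exp (2 * \<beta> * R)) powr \<xi>"
    and "thetaL N \<beta> R \<theta> \<xi> > 1"
proof -
  define Q where "Q = 2 * N * exp (2 * \<beta> * R)"
  have Q1: "Q \<ge> 1"
  proof -
    have "exp (2 * \<beta> * R) \<ge> 1" using assms by simp
    then show ?thesis unfolding Q_def using assms
      by (smt (verit) mult_le_cancel_left1 mult_mono)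
  qed
  have Qx: "Q powr \<xi> \<ge> 1" using Q1 assms by (simp add: ge_one_powr_ge_zero)
  define B where "B = 2 * (\<xi> / (4 * (\<beta> / Q)\<^sup>2)) powr (\<xi> / 2)"
  have B0: "B \<ge> 0" unfolding B_def by simp
  have T: "thetaL N \<beta> R \<theta> \<xi> = N * (2 * \<theta> * Q powr \<xi> + B)"
    unfolding thetaL_def Q_def B_def ..
  have "2 * \<theta> * Q powr \<xi> \<le> 1 * (2 * \<theta> * Q powr \<xi> + B)" using B0 by simp
  also have "\<dots> \<le> N * (2 * \<theta> * Q powr \<xi> + B)"
    using assms B0 Qx by (intro mult_right_mono) auto
  finally show 1: "thetaL N \<beta> R \<theta> \<xi> \<ge> 2 * \<theta> * (2 * N * exp (2 * \<beta> * R)) powr \<xi>"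
    unfolding T Q_def .
  have "2 * \<theta> * Q powr \<xi> > 1"
    using assms Qx by (smt (verit) mult_le_cancel_left1)
  then show "thetaL N \<beta> R \<theta> \<xi> > 1" using 1 unfolding Q_def by linarith
qed

context arm_ctx begin

lemma hoeff:
  assumes n: "n \<ge> 1" and e: "\<epsilon> \<ge> 0"
  shows "prob {\<omega> \<in> space M. \<epsilon> \<le> \<bar>real (state_count St s n \<omega>) - real n * pmf P s\<bar>}
           \<le> 2 * exp (-2 * \<epsilon>\<^sup>2 / real n)"
proof -
  define X where "X k \<omega> = (if St k \<omega> = s then 1 else (0::real))" for k \<omega>
  have ind: "indep_vars (\<lambda>_. borel) X {1..n}"
  proof -
    have "indep_vars (\<lambda>_. borel) (\<lambda>k \<omega>. (\<lambda>y. if y = s then 1 else (0::real)) (St k \<omega>)) {1..n}"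
      by (rule indep_vars_compose2[where Y="\<lambda>k y. if y = s then 1 else (0::real)" and N="\<lambda>_. borel",
            OF indep_vars_subset[OF indSt]]) auto
    then show ?thesis unfolding X_def by simp
  qed
  have AEX: "AE \<omega> in M. X i \<omega> \<in> {0..1}" for i by (simp add: X_def)
  have IB: "indep_interval_bounded_random_variables M {1..n} X (\<lambda>_. 0) (\<lambda>_. 1)"
    unfolding indep_interval_bounded_random_variables_def indep_interval_bounded_random_variables_axioms_def
    using ind AEX prob_space_axioms by blast
  interpret H: Hoeffding_ineq M "{1..n}" X "\<lambda>_. 0" "\<lambda>_. 1" "\<Sum>i\<in>{1..n}. expectation (X i)"
    unfolding Hoeffding_ineq_def using IB by simp
  have EX: "expectation (X k) = pmf P s" if "k \<in> {1..n}" for k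
  proof -
    have k: "k \<ge> 1" using that by simp
    have "expectation (X k) = (\<integral>\<omega>. (\<lambda>y. if y = s then 1 else (0::real)) (St k \<omega>) \<partial>M)"
      unfolding X_def by simp
    also have "\<dots> = (\<integral>y. (if y = s then 1 else (0::real)) \<partial>distr M (count_space UNIV) (St k))"
      by (rule integral_distr[OF St_M[OF k], symmetric]) simp
    also have "\<dots> = (\<integral>y. (if y = s then 1 else (0::real)) \<partial>measure_pmf P)"
      using distSt[OF k] by simp
    also have "\<dots> = pmf P s"
      by (subst integral_measure_pmf_real[where A="{s}"]) (auto split: if_splits)
    finally show ?thesis .
  qed
  have mu: "(\<Sum>i\<in>{1..n}. expectation (X i)) = real n * pmf P s"
    using EX by simp
  have sumX: "(\<Sum>i\<in>{1..n}. X i \<omega>) = real (state_count St s n \<omega>)" for \<omega>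
    unfolding X_def state_count_real ..
  have "prob {\<omega> \<in> space M. \<bar>(\<Sum>i\<in>{1..n}. X i \<omega>) - (\<Sum>i\<in>{1..n}. expectation (X i))\<bar> \<ge> \<epsilon>}
        \<le> 2 * exp (-2 * \<epsilon>\<^sup>2 / (\<Sum>i\<in>{1..n}. (1 - 0)\<^sup>2))"
    by (rule H.Hoeffding_ineq_abs_ge[OF e]) (use n in simp)
  then show ?thesis unfolding mu sumX by simp
qed

lemma main_bound:
  assumes z: "z \<ge> 1" and n: "n \<ge> 1"
    and A: "A \<subseteq> {\<omega> \<in> space M. real n powr \<eta> * z \<le>
              \<bar>real n * rho_hat \<beta> \<gamma> c x St n \<omega> - real n * erm_arm \<beta> \<gamma> c P muS\<bar>}"
  shows "measure M A \<le> thetaL (real CARD('s)) \<beta> (Rc + Rx) \<theta> \<xi> / z powr \<xi>"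
proof -
  define NN where "NN = real CARD('s)"
  define Q where "Q = 2 * NN * exp (2 * \<beta> * (Rc + Rx))"
  define cc where "cc = \<beta> / Q"
  define z1 where "z1 = z / Q"
  define TL where "TL = thetaL NN \<beta> (Rc + Rx) \<theta> \<xi>"
  have NN1: "NN \<ge> 1" unfolding NN_def using finite_UNIV_card_ge_0[where 'a='s] by simp
  have R0: "Rc + Rx \<ge> 0" using Rc0 Rx0 by simp
  have Q1: "Q \<ge> 1"
  proof -
    have "exp (2 * \<beta> * (Rc + Rx)) \<ge> 1" using \<beta> R0 by simp
    then show ?thesis unfolding Q_def using NN1
      by (smt (verit) mult_le_cancel_left1 mult_mono)
  qed
  have \<xi>0: "\<xi> > 0" using \<xi> by simp
  have TLge: "TL \<ge> 2 * \<theta> * Q powr \<xi>"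
    unfolding TL_def Q_def by (rule thetaL_gt(1)[OF NN1 \<beta> R0 \<theta> \<xi>])
  have TLdef: "TL = NN * (2 * \<theta> * Q powr \<xi> + 2 * (\<xi> / (4 * cc\<^sup>2)) powr (\<xi> / 2))"
    unfolding TL_def thetaL_def Q_def cc_def ..
  have zpos: "z powr \<xi> > 0" using z by simp
  show ?thesis
  proof (cases "z < Q")
    case True
    have "z powr \<xi> \<le> Q powr \<xi>" using True z \<xi>0 by (intro powr_mono2) auto
    also have "Q powr \<xi> \<le> 2 * \<theta> * Q powr \<xi>"
    proof -
      have "1 * Q powr \<xi> \<le> (2 * \<theta>) * Q powr \<xi>" using \<theta> by (intro mult_right_mono) auto
      then show ?thesis by simp
    qed
    also have "\<dots> \<le> TL" by (rule TLge)
    finally have "1 \<le> TL / z powr \<xi>" using zpos by simp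
    then show ?thesis using prob_le_1[of A] unfolding TL_def NN_def by linarith
  next
    case False
    then have zQ: "z \<ge> Q" by simp
    have z1: "z1 \<ge> 1" unfolding z1_def using zQ Q1 by simp
    have Qpos: "Q > 0" using Q1 by simp
    have ccpos: "cc > 0" unfolding cc_def using \<beta> Qpos by simp
    define Tset where "Tset s m = {\<omega> \<in> space M. state_count St s n \<omega> = m}" for s m
    define Bset where "Bset s = {\<omega> \<in> space M. cc * (real n powr \<eta> * z) \<le>
        \<bar>real (state_count St s n \<omega>) - real n * pmf P s\<bar>}" for s
    define V where "V s = (\<Union>m\<in>{1..n}. Tset s m \<inter> Fset s m z1)" for s
    define U where "U = (\<Union>s. V s \<union> Bset s)"
    have Tev: "Tset s m \<in> events" for s m
      unfolding Tset_def using event_T indep_setD_ev1[OF indX] by blast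
    have Fev: "Fset s m z1 \<in> events" for s m
      using event_F indep_setD_ev2[OF indX] by blast
    have Bev: "Bset s \<in> events" for s
    proof -
      note [measurable] = T_M
      show ?thesis unfolding Bset_def by measurable
    qed
    have Vev: "V s \<in> events" for s unfolding V_def using Tev Fev by auto
    have Uev: "U \<in> events" unfolding U_def using Vev Bev by auto
    have AU: "A \<subseteq> U"
    proof
      fix \<omega> assume "\<omega> \<in> A"
      with A have \<omega>: "\<omega> \<in> space M" and ineq: "real n powr \<eta> * z \<le>
              \<bar>real n * rho_hat \<beta> \<gamma> c x St n \<omega> - real n * erm_arm \<beta> \<gamma> c P muS\<bar>" by auto
      define a where "a s = \<beta> * real (state_count St s n \<omega>) *
              \<bar>rho_hat_state \<beta> \<gamma> x s (state_count St s n \<omega>) \<omega> - muS s\<bar>" for s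
      define b where "b s = \<bar>real (state_count St s n \<omega>) - real n * pmf P s\<bar>" for s
      define K0 where "K0 = exp (2 * \<beta> * (Rc + Rx)) / \<beta>"
      have K0: "K0 > 0" unfolding K0_def using \<beta> by simp
      have "\<bar>real n * rho_hat \<beta> \<gamma> c x St n \<omega> - real n * erm_arm \<beta> \<gamma> c P muS\<bar> \<le> K0 * (\<Sum>s\<in>UNIV. a s + b s)"
        unfolding K0_def a_def b_def
        by (rule key_pointwise[where x=x and muS=muS and \<omega>=\<omega>, OF \<beta> \<gamma> cb xb[OF \<omega>] muS_bound n])
      with ineq have "real n powr \<eta> * z \<le> K0 * (\<Sum>s\<in>UNIV. a s + b s)" by linarith
      then have w: "real n powr \<eta> * z / K0 \<le> (\<Sum>s\<in>UNIV. a s + b s)"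
        using K0 by (simp add: divide_le_eq mult.commute)
      have wc: "real n powr \<eta> * z / K0 / (2 * real (card (UNIV :: 's set))) = cc * (real n powr \<eta> * z)"
        unfolding K0_def cc_def Q_def NN_def using \<beta> by (simp add: field_simps)
      from split_exists[OF _ _ w] wc obtain s where
        s: "cc * (real n powr \<eta> * z) \<le> a s \<or> cc * (real n powr \<eta> * z) \<le> b s" by auto
      have npos: "real n powr \<eta> * z > 0" using n z by simp
      show "\<omega> \<in> U"
      proof (cases "cc * (real n powr \<eta> * z) \<le> b s")
        case True
        then have "\<omega> \<in> Bset s" unfolding Bset_def b_def using \<omega> by simp
        then show ?thesis unfolding U_def by blast
      next
        case False
        with s have as: "cc * (real n powr \<eta> * z) \<le> a s" by simp
        define m where "m = state_count St s n \<omega>"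
        define d where "d = \<bar>rho_hat_state \<beta> \<gamma> x s m \<omega> - muS s\<bar>"
        have as': "cc * (real n powr \<eta> * z) \<le> \<beta> * (real m * d)" using as unfolding a_def m_def d_def
          by (simp add: mult.assoc)
        have m0: "m \<noteq> 0"
        proof
          assume "m = 0"
          then have "cc * (real n powr \<eta> * z) \<le> 0" using as' by simp
          moreover have "cc * (real n powr \<eta> * z) > 0" using ccpos npos by (rule mult_pos_pos)
          ultimately show False by linarith
        qed
        have mn: "m \<le> n" unfolding m_def by (rule state_count_le)
        have "real m powr \<eta> \<le> real n powr \<eta>" using mn \<eta> by (intro powr_mono2) auto
        then have mz: "real m powr \<eta> * z1 \<le> real n powr \<eta> * z1" using z1 by (intro mult_right_mono) auto
        have "real n powr \<eta> * z1 = cc * (real n powr \<eta> * z) / \<beta>"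
          unfolding z1_def cc_def using \<beta> Qpos by (simp add: field_simps)
        also have "\<dots> \<le> real m * d" using as' \<beta> by (simp add: divide_le_eq mult.commute)
        finally have md: "real m powr \<eta> * z1 \<le> real m * d" using mz by linarith
        have "\<bar>real m * rho_hat_state \<beta> \<gamma> x s m \<omega> - real m * muS s\<bar> = real m * d"
          unfolding d_def by (simp add: abs_mult right_diff_distrib[symmetric])
        with md have "\<omega> \<in> Fset s m z1" unfolding Fset_def using \<omega> by (auto simp: abs_le_iff)
        moreover have "\<omega> \<in> Tset s m" unfolding Tset_def m_def using \<omega> by simp
        moreover have "m \<in> {1..n}" using m0 mn by simp
        ultimately have "\<omega> \<in> V s" unfolding V_def by blast
        then show ?thesis unfolding U_def by blast
      qed
    qed
    have PB: "prob (Bset s) \<le> 2 * (\<xi> / (4 * cc\<^sup>2)) powr (\<xi> / 2) / z powr \<xi>" for s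
    proof -
      define \<epsilon> where "\<epsilon> = cc * (real n powr \<eta> * z)"
      have e0: "\<epsilon> \<ge> 0" unfolding \<epsilon>_def using ccpos z by simp
      have "prob (Bset s) \<le> 2 * exp (-2 * \<epsilon>\<^sup>2 / real n)"
        unfolding Bset_def \<epsilon>_def[symmetric] by (rule hoeff[OF n e0])
      also have "exp (-2 * \<epsilon>\<^sup>2 / real n) \<le> exp (- ((2 * cc\<^sup>2) * z\<^sup>2))"
      proof -
        have "(real n powr \<eta>)\<^sup>2 = real n powr (2 * \<eta>)"
          by (simp add: power2_eq_square powr_add[symmetric])
        also have "\<dots> \<ge> real n powr 1" using n \<eta> by (intro powr_mono) auto
        finally have nn: "(real n powr \<eta>)\<^sup>2 \<ge> real n" using n by simp
        have "\<epsilon>\<^sup>2 = cc\<^sup>2 * z\<^sup>2 * (real n powr \<eta>)\<^sup>2" unfolding \<epsilon>_def by (simp add: power_mult_distrib)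
        also have "\<dots> \<ge> cc\<^sup>2 * z\<^sup>2 * real n" using nn by (intro mult_left_mono) auto
        finally have "cc\<^sup>2 * z\<^sup>2 \<le> \<epsilon>\<^sup>2 / real n" using n by (simp add: le_divide_eq)
        then have "-2 * \<epsilon>\<^sup>2 / real n \<le> - ((2 * cc\<^sup>2) * z\<^sup>2)" by simp
        then show ?thesis by simp
      qed
      also have "exp (- ((2 * cc\<^sup>2) * z\<^sup>2)) \<le> (\<xi> / 2 / (2 * cc\<^sup>2)) powr (\<xi> / 2) / z powr (2 * (\<xi> / 2))"
        by (rule exp_tail) (use ccpos \<xi> z in auto)
      also have "(\<xi> / 2 / (2 * cc\<^sup>2)) = \<xi> / (4 * cc\<^sup>2)" by simp
      also have "2 * (\<xi> / 2) = \<xi>" by simp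
      finally show ?thesis by simp
    qed
    have PV: "prob (V s) \<le> 2 * \<theta> * Q powr \<xi> / z powr \<xi>" for s
    proof -
      have "prob (V s) \<le> (\<Sum>m\<in>{1..n}. prob (Tset s m \<inter> Fset s m z1))"
        unfolding V_def by (rule measure_UNION_le) (use Tev Fev in auto)
      also have "\<dots> = (\<Sum>m\<in>{1..n}. prob (Tset s m) * prob (Fset s m z1))"
        unfolding Tset_def by (intro sum.cong refl indep_TF)
      also have "\<dots> \<le> (\<Sum>m\<in>{1..n}. prob (Tset s m) * (2 * \<theta> / z1 powr \<xi>))"
        by (intro sum_mono mult_left_mono prob_F z1) auto
      also have "\<dots> = prob (\<Union>m\<in>{1..n}. Tset s m) * (2 * \<theta> / z1 powr \<xi>)"
      proof -
        have "prob (\<Union>m\<in>{1..n}. Tset s m) = (\<Sum>m\<in>{1..n}. prob (Tset s m))"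
          by (rule finite_measure_finite_Union) (use Tev in \<open>auto simp: disjoint_family_on_def Tset_def\<close>)
        then show ?thesis by (simp only: sum_distrib_right)
      qed
      also have "\<dots> \<le> 1 * (2 * \<theta> / z1 powr \<xi>)"
        using \<theta> by (intro mult_right_mono) auto
      also have "\<dots> = 2 * \<theta> * Q powr \<xi> / z powr \<xi>"
        unfolding z1_def using Qpos by (simp add: powr_divide)
      finally show ?thesis .
    qed
    have "measure M A \<le> prob U" by (rule finite_measure_mono[OF AU Uev])
    also have "\<dots> \<le> (\<Sum>s\<in>UNIV. prob (V s \<union> Bset s))"
      unfolding U_def by (rule measure_UNION_le) (use Vev Bev in auto)
    also have "\<dots> \<le> (\<Sum>s\<in>(UNIV::'s set). 2 * \<theta> * Q powr \<xi> / z powr \<xi> + 2 * (\<xi> / (4 * cc\<^sup>2)) powr (\<xi> / 2) / z powr \<xi>)"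
    proof (intro sum_mono)
      fix s
      have "prob (V s \<union> Bset s) \<le> prob (V s) + prob (Bset s)"
        by (rule measure_Un_le) (use Vev Bev in auto)
      then show "prob (V s \<union> Bset s) \<le> 2 * \<theta> * Q powr \<xi> / z powr \<xi> + 2 * (\<xi> / (4 * cc\<^sup>2)) powr (\<xi> / 2) / z powr \<xi>"
        using PV[of s] PB[of s] by linarith
    qed
    also have "\<dots> = TL / z powr \<xi>"
      unfolding TLdef NN_def by (simp add: add_divide_distrib[symmetric])
    finally show ?thesis unfolding TL_def NN_def .
  qed
qed

end

lemma ev_aux1:
  fixes \<epsilon> \<eta> \<xi> C r :: real
  shows "0<\<epsilon> \<Longrightarrow> \<eta> < 1 \<Longrightarrow> 0<\<xi> \<Longrightarrow> 0 < C \<Longrightarrow> 0<r \<Longrightarrow>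
    eventually (\<lambda>n. C/(\<epsilon>*real n powr (1-\<eta>)) powr \<xi> < r) at_top"
  by real_asymp

lemma ev_aux2:
  fixes \<epsilon> \<eta> :: real
  shows "0<\<epsilon> \<Longrightarrow> \<eta> < 1 \<Longrightarrow> eventually (\<lambda>n. 1 \<le> \<epsilon>*real n powr (1-\<eta>)) at_top"
  by real_asymp

context arm_ctx begin

lemma rho_meas: "(\<lambda>\<omega>. rho_hat \<beta> \<gamma> c x St n \<omega>) \<in> borel_measurable M"
proof -
  have eq: "(\<Sum>t = 1..state_count St s n \<omega>. f t) =
      (\<Sum>t\<in>{1..n}. if real t \<le> real (state_count St s n \<omega>) then f t else 0)" for s \<omega> and f :: "nat \<Rightarrow> real"
  proof -
    have "{t \<in> {1..n}. real t \<le> real (state_count St s n \<omega>)} = {1..state_count St s n \<omega>}"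
      using state_count_le[of St s n \<omega>] by auto
    then show ?thesis by (simp add: sum.inter_filter[symmetric])
  qed
  note [measurable] = T_M xm
  have "(\<lambda>\<omega>. (1 / \<beta>) * ln ((1 / real n) *
        (\<Sum>s\<in>UNIV. \<Sum>t\<in>{1..n}. if real t \<le> real (state_count St s n \<omega>)
            then exp (\<beta> * (c + \<gamma> * x s t \<omega>)) else 0))) \<in> borel_measurable M"
    by measurable
  then show ?thesis unfolding rho_hat_def eq .
qed

lemma rho_dev_bound:
  assumes n: "n \<ge> 1" and \<omega>: "\<omega> \<in> space M"
  shows "\<bar>rho_hat \<beta> \<gamma> c x St n \<omega> - erm_arm \<beta> \<gamma> c P muS\<bar>
     \<le> exp (2 * \<beta> * (Rc + Rx)) / \<beta> * (2 * \<beta> * Rx + 2)"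
proof -
  define K0 where "K0 = exp (2 * \<beta> * (Rc + Rx)) / \<beta>"
  have K0: "K0 > 0" unfolding K0_def using \<beta> by simp
  define T where "T s = state_count St s n \<omega>" for s
  have key: "\<bar>real n * rho_hat \<beta> \<gamma> c x St n \<omega> - real n * erm_arm \<beta> \<gamma> c P muS\<bar> \<le> K0 *
        (\<Sum>s\<in>UNIV. \<beta> * real (T s) * \<bar>rho_hat_state \<beta> \<gamma> x s (T s) \<omega> - muS s\<bar>
           + \<bar>real (T s) - real n * pmf P s\<bar>)"
    unfolding K0_def T_def
    by (rule key_pointwise[where x=x and muS=muS and \<omega>=\<omega>, OF \<beta> \<gamma> cb xb[OF \<omega>] muS_bound n])
  have each: "\<beta> * real (T s) * \<bar>rho_hat_state \<beta> \<gamma> x s (T s) \<omega> - muS s\<bar>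
           + \<bar>real (T s) - real n * pmf P s\<bar> \<le> (2 * \<beta> * Rx + 1) * real (T s) + real n * pmf P s" for s
  proof -
    have a: "\<beta> * real (T s) * \<bar>rho_hat_state \<beta> \<gamma> x s (T s) \<omega> - muS s\<bar> \<le> (2 * \<beta> * Rx) * real (T s)"
    proof (cases "T s = 0")
      case True then show ?thesis by simp
    next
      case False
      then have "T s \<ge> 1" by simp
      then have "\<bar>rho_hat_state \<beta> \<gamma> x s (T s) \<omega>\<bar> \<le> Rx"
        by (intro rho_hat_state_bound[where x=x and s=s and \<omega>=\<omega>, OF \<beta> \<gamma>]) (use xb[OF \<omega>] in auto)
      then have "\<bar>rho_hat_state \<beta> \<gamma> x s (T s) \<omega> - muS s\<bar> \<le> 2 * Rx"
        using muS_bound[of s] by linarith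
      then have "(\<beta> * real (T s)) * \<bar>rho_hat_state \<beta> \<gamma> x s (T s) \<omega> - muS s\<bar> \<le> (\<beta> * real (T s)) * (2 * Rx)"
        using \<beta> by (intro mult_left_mono) auto
      then show ?thesis by (simp add: mult_ac)
    qed
    have b: "\<bar>real (T s) - real n * pmf P s\<bar> \<le> real (T s) + real n * pmf P s"
      by (simp add: abs_le_iff)
    show ?thesis using a b by (simp add: algebra_simps)
  qed
  have "(\<Sum>s\<in>UNIV. \<beta> * real (T s) * \<bar>rho_hat_state \<beta> \<gamma> x s (T s) \<omega> - muS s\<bar>
           + \<bar>real (T s) - real n * pmf P s\<bar>) \<le> (\<Sum>s\<in>UNIV. (2 * \<beta> * Rx + 1) * real (T s) + real n * pmf P s)"
    by (rule sum_mono) (rule each)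
  also have "\<dots> = (2 * \<beta> * Rx + 1) * (\<Sum>s\<in>UNIV. real (T s)) + real n * (\<Sum>s\<in>UNIV. pmf P s)"
    by (simp add: sum.distrib sum_distrib_left)
  also have "(\<Sum>s\<in>UNIV. real (T s)) = real n"
    unfolding T_def using sum_state_count[of St n \<omega>] by (metis of_nat_sum)
  also have "(\<Sum>s\<in>UNIV. pmf P s) = 1" by (rule sum_pmf_eq_1) auto
  finally have S: "(\<Sum>s\<in>UNIV. \<beta> * real (T s) * \<bar>rho_hat_state \<beta> \<gamma> x s (T s) \<omega> - muS s\<bar>
           + \<bar>real (T s) - real n * pmf P s\<bar>) \<le> real n * (2 * \<beta> * Rx + 2)"
    by (simp add: algebra_simps)
  have "real n * \<bar>rho_hat \<beta> \<gamma> c x St n \<omega> - erm_arm \<beta> \<gamma> c P muS\<bar>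
      = \<bar>real n * rho_hat \<beta> \<gamma> c x St n \<omega> - real n * erm_arm \<beta> \<gamma> c P muS\<bar>"
    by (simp add: abs_mult right_diff_distrib[symmetric])
  also have "\<dots> \<le> K0 * (real n * (2 * \<beta> * Rx + 2))"
    using key S K0 by (meson mult_left_mono less_imp_le order.trans)
  finally have "real n * \<bar>rho_hat \<beta> \<gamma> c x St n \<omega> - erm_arm \<beta> \<gamma> c P muS\<bar>
      \<le> real n * (K0 * (2 * \<beta> * Rx + 2))" by (simp add: mult_ac)
  then have "\<bar>rho_hat \<beta> \<gamma> c x St n \<omega> - erm_arm \<beta> \<gamma> c P muS\<bar> \<le> K0 * (2 * \<beta> * Rx + 2)"
    using n by (simp add: mult_le_cancel_left_pos)
  then show ?thesis unfolding K0_def by simp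
qed


lemma limit: "(\<lambda>n. integral\<^sup>L M (rho_hat \<beta> \<gamma> c x St n)) \<longlonglongrightarrow> erm_arm \<beta> \<gamma> c P muS"
proof (rule LIMSEQ_I)
  fix r :: real assume r: "r > 0"
  define \<mu>0 where "\<mu>0 = erm_arm \<beta> \<gamma> c P muS"
  define D where "D = exp (2 * \<beta> * (Rc + Rx)) / \<beta> * (2 * \<beta> * Rx + 2)"
  define TL where "TL = thetaL (real CARD('s)) \<beta> (Rc + Rx) \<theta> \<xi>"
  define \<epsilon> where "\<epsilon> = r / 2"
  have D0: "D > 0" unfolding D_def using \<beta> Rx0 by (simp add: add_nonneg_pos)
  have NN1: "real CARD('s) \<ge> 1" using finite_UNIV_card_ge_0[where 'a='s] by simp
  have TL1: "TL > 1" unfolding TL_def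
    by (rule thetaL_gt(2)[OF NN1 \<beta> _ \<theta> \<xi>]) (use Rc0 Rx0 in simp)
  have e0: "\<epsilon> > 0" unfolding \<epsilon>_def using r by simp
  have ev1: "eventually (\<lambda>n. D * TL / (\<epsilon> * real n powr (1 - \<eta>)) powr \<xi> < r / 2) at_top"
    by (rule ev_aux1) (use e0 \<eta> \<xi> D0 TL1 r in auto)
  have ev2: "eventually (\<lambda>n. 1 \<le> \<epsilon> * real n powr (1 - \<eta>)) at_top"
    by (rule ev_aux2) (use e0 \<eta> in auto)
  from eventually_conj[OF ev1 ev2] obtain N0 where
    N0: "\<And>n. n \<ge> N0 \<Longrightarrow> D * TL / (\<epsilon> * real n powr (1 - \<eta>)) powr \<xi> < r / 2 \<and>
                         1 \<le> \<epsilon> * real n powr (1 - \<eta>)"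
    unfolding eventually_at_top_linorder by blast
  show "\<exists>no. \<forall>n\<ge>no. norm (integral\<^sup>L M (rho_hat \<beta> \<gamma> c x St n) - erm_arm \<beta> \<gamma> c P muS) < r"
  proof (intro exI[of _ "max N0 1"] allI impI)
    fix n assume "n \<ge> max N0 1"
    then have n: "n \<ge> 1" and nN: "n \<ge> N0" by auto
    define f where "f \<omega> = rho_hat \<beta> \<gamma> c x St n \<omega>" for \<omega>
    define Gs where "Gs = {\<omega> \<in> space M. \<epsilon> \<le> \<bar>f \<omega> - \<mu>0\<bar>}"
    define z where "z = \<epsilon> * real n powr (1 - \<eta>)"
    have fm[measurable]: "f \<in> borel_measurable M" unfolding f_def by (rule rho_meas)
    have fb: "\<bar>f \<omega> - \<mu>0\<bar> \<le> D" if "\<omega> \<in> space M" for \<omega>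
      unfolding f_def \<mu>0_def D_def by (rule rho_dev_bound[OF n that])
    have fint: "integrable M f"
    proof (rule integrable_const_bound[where B="\<bar>\<mu>0\<bar> + D"])
      show "AE \<omega> in M. norm (f \<omega>) \<le> \<bar>\<mu>0\<bar> + D"
        using fb by (intro AE_I2) (smt (verit) real_norm_def)
    qed (rule fm)
    have Gev: "Gs \<in> events" unfolding Gs_def by measurable
    have z1: "z \<ge> 1" unfolding z_def using N0[OF nN] by simp
    have PG: "prob Gs \<le> TL / z powr \<xi>" unfolding TL_def
    proof (rule main_bound[OF z1 n])
      show "Gs \<subseteq> {\<omega> \<in> space M. real n powr \<eta> * z \<le>
              \<bar>real n * rho_hat \<beta> \<gamma> c x St n \<omega> - real n * erm_arm \<beta> \<gamma> c P muS\<bar>}"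
      proof
        fix \<omega> assume "\<omega> \<in> Gs"
        then have \<omega>: "\<omega> \<in> space M" and ge: "\<epsilon> \<le> \<bar>f \<omega> - \<mu>0\<bar>" unfolding Gs_def by auto
        have "real n powr \<eta> * z = \<epsilon> * (real n powr \<eta> * real n powr (1 - \<eta>))"
          unfolding z_def by (simp add: mult_ac)
        also have "real n powr \<eta> * real n powr (1 - \<eta>) = real n"
          using n by (simp add: powr_add[symmetric])
        also have "\<epsilon> * real n \<le> \<bar>f \<omega> - \<mu>0\<bar> * real n"
          using ge by (intro mult_right_mono) auto
        also have "\<bar>f \<omega> - \<mu>0\<bar> * real n = \<bar>real n * rho_hat \<beta> \<gamma> c x St n \<omega> - real n * erm_arm \<beta> \<gamma> c P muS\<bar>"
          unfolding f_def \<mu>0_def by (simp add: abs_mult right_diff_distrib[symmetric] mult.commute)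
        finally show "\<omega> \<in> {\<omega> \<in> space M. real n powr \<eta> * z \<le>
              \<bar>real n * rho_hat \<beta> \<gamma> c x St n \<omega> - real n * erm_arm \<beta> \<gamma> c P muS\<bar>}"
          using \<omega> by simp
      qed
    qed
    have "integral\<^sup>L M f - \<mu>0 = (\<integral>\<omega>. f \<omega> - \<mu>0 \<partial>M)"
      using fint by (simp add: prob_space)
    then have "\<bar>integral\<^sup>L M f - \<mu>0\<bar> \<le> (\<integral>\<omega>. \<bar>f \<omega> - \<mu>0\<bar> \<partial>M)"
      using integral_abs_bound by metis
    also have "\<dots> \<le> (\<integral>\<omega>. \<epsilon> + D * indicator Gs \<omega> \<partial>M)"
    proof (rule integral_mono)
      show "integrable M (\<lambda>\<omega>. \<bar>f \<omega> - \<mu>0\<bar>)" using fint by auto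
      show "integrable M (\<lambda>\<omega>. \<epsilon> + D * indicator Gs \<omega>)"
        by (intro Bochner_Integration.integrable_add integrable_mult_right integrable_real_indicator Gev integrable_const)
           (simp add: less_top[symmetric])
      fix \<omega> assume \<omega>: "\<omega> \<in> space M"
      show "\<bar>f \<omega> - \<mu>0\<bar> \<le> \<epsilon> + D * indicator Gs \<omega>"
      proof (cases "\<omega> \<in> Gs")
        case True then show ?thesis using fb[OF \<omega>] e0 by simp
      next
        case False then show ?thesis using \<omega> unfolding Gs_def by simp
      qed
    qed
    also have "(\<integral>\<omega>. \<epsilon> + D * indicator Gs \<omega> \<partial>M) = \<epsilon> + D * prob Gs"
    proof -
      have ii: "integrable M (indicator Gs :: 'w \<Rightarrow> real)"
        by (intro integrable_real_indicator Gev) (simp add: less_top[symmetric])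
      have "(\<integral>\<omega>. \<epsilon> + D * indicator Gs \<omega> \<partial>M) = (\<integral>\<omega>. \<epsilon> \<partial>M) + (\<integral>\<omega>. D * indicator Gs \<omega> \<partial>M)"
        by (rule Bochner_Integration.integral_add) (use ii in auto)
      also have "(\<integral>\<omega>. D * indicator Gs \<omega> \<partial>M) = D * prob Gs"
        using Gev sets.sets_into_space[OF Gev] by (simp add: Int_absorb2)
      finally show ?thesis by (simp add: prob_space)
    qed
    also have "D * prob Gs \<le> D * (TL / z powr \<xi>)" using PG D0 by (intro mult_left_mono) auto
    also have "D * (TL / z powr \<xi>) < r / 2" using N0[OF nN] unfolding z_def by simp
    finally show "norm (integral\<^sup>L M (rho_hat \<beta> \<gamma> c x St n) - erm_arm \<beta> \<gamma> c P muS) < r"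
      unfolding f_def \<mu>0_def \<epsilon>_def by simp
  qed
qed

end

theorem lemma3:
  fixes \<theta> \<xi> \<eta> \<beta> Rc Rx :: real
  assumes "\<theta> > 1" and "\<xi> > 1" and "1/2 \<le> \<eta>" and "\<eta> < 1"
    and "\<beta> > 0" and "Rc \<ge> 0" and "Rx \<ge> 0"
  shows "\<exists>\<theta>L > 1. \<forall>(M :: 'w measure) \<gamma> c (P :: 's::finite pmf) x St muS.
           arm_model M \<gamma> Rc Rx c P x St \<and> state_assm M \<beta> \<gamma> x muS \<theta> \<xi> \<eta> \<longrightarrow>
           ((\<lambda>n. integral\<^sup>L M (rho_hat \<beta> \<gamma> c x St n))
               \<longlonglongrightarrow> erm_arm \<beta> \<gamma> c P muS) \<and>
           (\<forall>z n. z \<ge> 1 \<longrightarrow> n \<ge> 1 \<longrightarrow>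
              measure M {\<omega> \<in> space M. real n * rho_hat \<beta> \<gamma> c x St n \<omega>
                          - real n * erm_arm \<beta> \<gamma> c P muS \<ge> real n powr \<eta> * z}
                \<le> \<theta>L / z powr \<xi> \<and>
              measure M {\<omega> \<in> space M. real n * rho_hat \<beta> \<gamma> c x St n \<omega>
                          - real n * erm_arm \<beta> \<gamma> c P muS \<le> - (real n powr \<eta> * z)}
                \<le> \<theta>L / z powr \<xi>)"
proof (intro exI[of _ "thetaL (real CARD('s)) \<beta> (Rc + Rx) \<theta> \<xi>"] conjI allI impI)
  have NN1: "real CARD('s) \<ge> 1" using finite_UNIV_card_ge_0[where 'a='s] by simp
  show "thetaL (real CARD('s)) \<beta> (Rc + Rx) \<theta> \<xi> > 1"
    by (rule thetaL_gt(2)[OF NN1 \<open>\<beta> > 0\<close> _ \<open>\<theta> > 1\<close> \<open>\<xi> > 1\<close>]) (use assms in simp)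
  fix M :: "'w measure" and \<gamma> c and P :: "'s pmf" and x St muS
  assume H: "arm_model M \<gamma> Rc Rx c P x St \<and> state_assm M \<beta> \<gamma> x muS \<theta> \<xi> \<eta>"
  interpret arm_ctx M \<gamma> Rc Rx c P x St muS \<beta> \<theta> \<xi> \<eta>
    using H assms unfolding arm_model_def state_assm_def arm_ctx_def arm_ctx_axioms_def
    by auto
  show "(\<lambda>n. integral\<^sup>L M (rho_hat \<beta> \<gamma> c x St n)) \<longlonglongrightarrow> erm_arm \<beta> \<gamma> c P muS"
    by (rule limit)
  fix z :: real and n :: nat
  assume z: "z \<ge> 1" and n: "n \<ge> 1"
  show "measure M {\<omega> \<in> space M. real n * rho_hat \<beta> \<gamma> c x St n \<omega>
                          - real n * erm_arm \<beta> \<gamma> c P muS \<ge> real n powr \<eta> * z}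
                \<le> thetaL (real CARD('s)) \<beta> (Rc + Rx) \<theta> \<xi> / z powr \<xi>"
    by (rule main_bound[OF z n]) auto
  show "measure M {\<omega> \<in> space M. real n * rho_hat \<beta> \<gamma> c x St n \<omega>
                          - real n * erm_arm \<beta> \<gamma> c P muS \<le> - (real n powr \<eta> * z)}
                \<le> thetaL (real CARD('s)) \<beta> (Rc + Rx) \<theta> \<xi> / z powr \<xi>"
    by (rule main_bound[OF z n]) auto
qed

end
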